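(* Let $\mathscr{A}(n)=\{S\in\mathrm{Gl}(2n,\mathbb{R})\mid S^2=\mathbb{1},\ \omega(Sv,Sw)=-\omega(v,w)\ \forall v,w\in\mathbb{R}^{2n}\}$ be the space of linear anti-symplectic involutions of the standard symplectic vector space $(\mathbb{R}^{2n},\omega)$, and let $\mathcal{L}(n)$ be the Lagrangian Grassmannian of all linear Lagrangian subspaces of $\mathbb{R}^{2n}$. Then $\mathscr{A}(n)$ is diffeomorphic to the tangent bundle $T\mathcal{L}(n)$.
   Context: $\omega$ denotes the standard symplectic form on $\mathbb{R}^{2n}$. *)

theory Defs
  imports "HOL-Analysis.Analysis"
begin

text \<open>The standard symplectic vector space (R^{2n}, omega) is modelled as
  real^('n + 'n), with coordinates x_i = v$(Inl i), y_i = v$(Inr i), and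
  omega(v,w) = sum_i (x_i(v) y_i(w) - y_i(v) x_i(w)).  Here n = CARD('n).\<close>

definition symp :: "real^('n::finite + 'n) \<Rightarrow> real^('n + 'n) \<Rightarrow> real" where
  "symp v w = (\<Sum>i\<in>UNIV. v $ Inl i * w $ Inr i - v $ Inr i * w $ Inl i)"

text \<open>C-infinity maps on an open set (Frechet sense): coinductively, f is
  differentiable at every point and every directional derivative x \<mapsto> D x h
  is again C-infinity.\<close>

coinductive smooth_on :: "'a::euclidean_space set \<Rightarrow> ('a \<Rightarrow> 'b::euclidean_space) \<Rightarrow> bool"
  for U where
  "(\<forall>x\<in>U. (f has_derivative D x) (at x)) \<Longrightarrow> (\<forall>h. smooth_on U (\<lambda>x. D x h))
     \<Longrightarrow> smooth_on U f"

definition smooth_map_on :: "'a::euclidean_space set \<Rightarrow> ('a \<Rightarrow> 'b::euclidean_space) \<Rightarrow> bool" where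
  "smooth_map_on S f \<longleftrightarrow>
     (\<forall>x\<in>S. \<exists>U g. open U \<and> x \<in> U \<and> smooth_on U g \<and> (\<forall>y\<in>S \<inter> U. g y = f y))"

definition diffeomorphic_sets :: "'a::euclidean_space set \<Rightarrow> 'b::euclidean_space set \<Rightarrow> bool" where
  "diffeomorphic_sets S T \<longleftrightarrow>
     (\<exists>f g. f ` S \<subseteq> T \<and> g ` T \<subseteq> S \<and> (\<forall>x\<in>S. g (f x) = x) \<and> (\<forall>y\<in>T. f (g y) = y)
        \<and> smooth_map_on S f \<and> smooth_map_on T g)"

definition tangent_space :: "'a::euclidean_space set \<Rightarrow> 'a \<Rightarrow> 'a set" where
  "tangent_space M p = {v. \<exists>\<gamma> e. e > 0 \<and> smooth_on {-e<..<e} \<gamma> \<and> \<gamma> ` {-e<..<e} \<subseteq> M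
        \<and> \<gamma> 0 = p \<and> (\<gamma> has_vector_derivative v) (at 0)}"

definition tangent_bundle :: "'a::euclidean_space set \<Rightarrow> ('a \<times> 'a) set" where
  "tangent_bundle M = {(p, v). p \<in> M \<and> v \<in> tangent_space M p}"

definition antisymp_invol :: "(real^('n::finite + 'n)^('n + 'n)) set" where
  "antisymp_invol = {S. invertible S \<and> S ** S = mat 1 \<and>
      (\<forall>v w. symp (S *v v) (S *v w) = - symp v w)}"

definition lagrangian :: "(real^('n::finite + 'n)) set \<Rightarrow> bool" where
  "lagrangian L \<longleftrightarrow> subspace L \<and> dim L = CARD('n) \<and> (\<forall>v\<in>L. \<forall>w\<in>L. symp v w = 0)"

text \<open>The Lagrangian Grassmannian, realised as a subset of the matrices via the
  standard embedding L \<mapsto> orthogonal projection onto L.\<close>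

definition lag_grassmannian :: "(real^('n::finite + 'n)^('n + 'n)) set" where
  "lag_grassmannian = {P. \<exists>L. lagrangian L \<and>
      (\<forall>x. P *v x \<in> L \<and> (\<forall>y\<in>L. (x - P *v x) \<bullet> y = 0))}"

end

theory Submission
  imports Defs
begin


type_synonym 'n mat2 = "real^('n+'n)^('n+'n)"

lemma mm_assoc: "(A ** B) ** C = A ** (B ** C)" for A :: "real^'a^'b"
  by (simp add: matrix_mul_assoc)
lemma mm_radd: "(A + B) ** C = A ** C + B ** C" for A :: "real^'a^'b"
  by (vector matrix_matrix_mult_def sum.distrib[symmetric] field_simps)
lemma mm_ladd: "C ** (A + B) = C ** A + C ** B" for A :: "real^'a^'b"
  by (rule matrix_add_ldistrib)
lemma mm_rdiff: "(A - B) ** C = A ** C - B ** C" for A :: "real^'a^'b"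
  by (vector matrix_matrix_mult_def sum_subtractf[symmetric] field_simps)
lemma mm_ldiff: "C ** (A - B) = C ** A - C ** B" for A :: "real^'a^'b"
  by (vector matrix_matrix_mult_def sum_subtractf[symmetric] field_simps)
lemma mm_rneg: "(- A) ** C = - (A ** C)" for A :: "real^'a^'b"
  by (vector matrix_matrix_mult_def sum_negf[symmetric] field_simps)
lemma mm_lneg: "C ** (- A) = - (C ** A)" for A :: "real^'a^'b"
  by (vector matrix_matrix_mult_def sum_negf[symmetric] field_simps)
lemma mm_rscale: "(r *\<^sub>R A) ** C = r *\<^sub>R (A ** C)" for A :: "real^'a^'b"
  by (simp add: scalar_matrix_assoc)
lemma mm_lscale: "C ** (r *\<^sub>R A) = r *\<^sub>R (C ** A)" for A :: "real^'a^'b"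
  by (simp add: matrix_scalar_ac scalar_matrix_assoc)
lemma tr_add: "transpose (A + B) = transpose A + transpose B"
  by (vector transpose_def)
lemma tr_diff: "transpose (A - B) = transpose A - transpose B"
  by (vector transpose_def)
lemma tr_neg: "transpose (- A) = - transpose A"
  by (vector transpose_def)
lemma tr_0: "transpose 0 = 0"
  by (vector transpose_def)

lemmas mmsimps = mm_assoc mm_radd mm_ladd mm_rdiff mm_ldiff mm_rneg mm_lneg mm_rscale mm_lscale
  tr_add tr_diff tr_neg tr_0 transpose_scalar matrix_transpose_mul matrix_mul_lid matrix_mul_rid

lemma mm_cong: "A ** B = C \<Longrightarrow> A ** (B ** D) = C ** D" for A :: "real^'a^'b"
  by (simp add: matrix_mul_assoc)

lemma test: fixes P X :: "'n::finite mat2"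
  assumes "P ** P = P" 
  shows "(P - P ** X ** (mat 1 - P)) ** (P - P ** X ** (mat 1 - P)) = P - P ** X ** (mat 1 - P)"
  by (simp add: mmsimps algebra_simps assms mm_cong[OF assms])


lemma sum_sumtype: "(\<Sum>a\<in>(UNIV::('a::finite+'b::finite) set). f a) = (\<Sum>i\<in>UNIV. f (Inl i)) + (\<Sum>i\<in>UNIV. f (Inr i))"
proof -
  have "(\<Sum>a\<in>(UNIV::('a+'b) set). f a) = sum f (Inl ` UNIV \<union> Inr ` UNIV)" by (simp add: UNIV_sum[symmetric])
  also have "\<dots> = sum f (Inl ` UNIV) + sum f (Inr ` UNIV)"
    by (rule sum.union_disjoint) auto
  also have "\<dots> = (\<Sum>i\<in>UNIV. f (Inl i)) + (\<Sum>i\<in>UNIV. f (Inr i))"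
    by (simp add: sum.reindex)
  finally show ?thesis .
qed

lemma card_sumtype: "CARD('a::finite + 'a) = 2 * CARD('a)"
proof -
  have "card (range Inl \<union> range (Inr::'a\<Rightarrow>'a+'a)) = card (range (Inl::'a\<Rightarrow>'a+'a)) + card (range (Inr::'a\<Rightarrow>'a+'a))"
    by (rule card_Un_disjoint) auto
  moreover have "card (range (Inl::'a\<Rightarrow>'a+'a)) = CARD('a)" by (simp add: card_image)
  moreover have "card (range (Inr::'a\<Rightarrow>'a+'a)) = CARD('a)" by (simp add: card_image)
  ultimately show ?thesis by (simp add: UNIV_sum[symmetric])
qed
  
definition Om :: "'n::finite mat2" where
  "Om = (\<chi> a b. case a of Inl i \<Rightarrow> (case b of Inr j \<Rightarrow> if i = j then 1 else 0 | Inl _ \<Rightarrow> 0)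
                        | Inr i \<Rightarrow> (case b of Inl j \<Rightarrow> if i = j then -1 else 0 | Inr _ \<Rightarrow> 0))"

lemma symp_Om: "symp v w = v \<bullet> (Om *v w)"
  by (simp add: symp_def inner_vec_def matrix_vector_mult_def Om_def sum_sumtype
      if_distrib if_distribR sum.If_cases sum_distrib_left sum_subtractf sum_negf cong: if_cong)

lemma Om_tr: "transpose Om = - Om"
  by (auto simp: Om_def transpose_def vec_eq_iff split: sum.splits)

lemma Om_sq: "Om ** Om = (- mat 1 :: 'n::finite mat2)"
  unfolding vec_eq_iff
proof (intro allI)
  fix a b :: "'n+'n"
  show "(Om ** Om) $ a $ b = (- mat 1 :: 'n mat2) $ a $ b"
    by (cases a; cases b) (simp_all add: Om_def matrix_matrix_mult_def mat_def sum_sumtype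
        if_distrib if_distribR sum.If_cases cong: if_cong)
qed


lemma bilinear_mm: "bilinear (\<lambda>(A::real^'a::finite^'b::finite) (B::real^'c::finite^'a). A ** B)"
  unfolding bilinear_def
  by (auto intro!: linearI simp: mm_ladd mm_radd mm_lscale mm_rscale)

lemma bb_mm: "bounded_bilinear (\<lambda>(A::real^'a::finite^'b::finite) (B::real^'c::finite^'a). A ** B)"
  using bilinear_mm bilinear_conv_bounded_bilinear by blast

lemma minv: assumes "invertible A"
  shows "A ** matrix_inv A = mat 1" "matrix_inv A ** A = mat 1"
  using someI_ex[OF assms[unfolded invertible_def]] unfolding matrix_inv_def by auto

lemma cont_entry: "continuous_on S (\<lambda>A::real^'a::finite^'b::finite. A $ i $ j)"
  by (intro linear_continuous_on bounded_linear_compose[OF bounded_linear_vec_nth bounded_linear_vec_nth])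

lemma cont_det: "continuous_on S (\<lambda>A::real^'a::finite^'a. det A)"
  unfolding det_def by (intro continuous_intros cont_entry)

lemma open_invertible: "open {A::real^'a::finite^'a. invertible A}"
proof -
  have "{A::real^'a::finite^'a. invertible A} = {A. det A \<noteq> 0}" by (simp add: invertible_det_nz)
  moreover have "open {A::real^'a::finite^'a. det A \<noteq> 0}"
    by (rule open_Collect_neq) (auto intro: cont_det continuous_intros)
  ultimately show ?thesis by simp
qed

lemma minv_cramer: fixes A :: "real^'a::finite^'a" assumes "invertible A"
  shows "matrix_inv A = (\<chi> k j. det(\<chi> i i'. if i' = k then (axis j 1 :: real^'a) $ i else A$i$i') / det A)"
proof -
  have d: "det A \<noteq> 0" using assms invertible_det_nz by blast
  show ?thesis unfolding vec_eq_iff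
  proof (intro allI)
    fix k j
    have "A *v (matrix_inv A *v axis j 1) = axis j 1"
      by (simp add: matrix_vector_mul_assoc minv(1)[OF assms])
    then have "matrix_inv A *v axis j 1 = (\<chi> k. det(\<chi> i i'. if i' = k then (axis j 1 :: real^'a) $ i else A$i$i') / det A)"
      using cramer[OF d] by blast
    then have "(matrix_inv A *v axis j 1) $ k = det(\<chi> i i'. if i' = k then (axis j 1 :: real^'a) $ i else A$i$i') / det A"
      by simp
    moreover have "(matrix_inv A *v axis j 1) $ k = matrix_inv A $ k $ j"
      by (simp add: matrix_vector_mult_def axis_def if_distrib if_distribR cong: if_cong)
    ultimately show "matrix_inv A $ k $ j = (\<chi> k j. det(\<chi> i i'. if i' = k then (axis j 1 :: real^'a) $ i else A$i$i') / det A) $ k $ j"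
      by simp
  qed
qed

lemma cont_minv: "continuous_on {A::real^'a::finite^'a. invertible A} matrix_inv"
proof -
  have "continuous_on {A::real^'a::finite^'a. invertible A}
     (\<lambda>A. (\<chi> k j. det(\<chi> i i'. if i' = k then (axis j 1 :: real^'a) $ i else A$i$i') / det A))"
    unfolding det_def
    apply (intro continuous_intros cont_entry)
     apply (case_tac "i' = k"; simp add: cont_entry)
    apply (auto simp: invertible_det_nz det_def)
    done
  then show ?thesis
    by (rule continuous_on_eq) (simp add: minv_cramer)
qed


lemma mm_bound: "\<exists>K>0. \<forall>(A::real^'a::finite^'b::finite) (B::real^'c::finite^'a). norm (A ** B) \<le> norm A * norm B * K"
  using bounded_bilinear.pos_bounded[OF bb_mm] by blast

lemma bl_mm_left: "bounded_linear (\<lambda>X::real^'a::finite^'b::finite. X ** (M::real^'c::finite^'a))"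
  using bounded_bilinear.bounded_linear_left[OF bb_mm] .
lemma bl_mm_right: "bounded_linear (\<lambda>X::real^'c::finite^'a::finite. (M::real^'a^'b::finite) ** X)"
  using bounded_bilinear.bounded_linear_right[OF bb_mm] .

lemma minv_deriv: fixes A :: "real^'a::finite^'a" assumes "invertible A"
  shows "(matrix_inv has_derivative (\<lambda>H. - (matrix_inv A ** H ** matrix_inv A))) (at A)"
proof -
  define B where "B = matrix_inv A"
  obtain K where K: "K > 0" "\<And>(X::real^'a^'a) (Y::real^'a^'a). norm (X ** Y) \<le> norm X * norm Y * K"
    using mm_bound by blast
  obtain e where e: "e > 0" "ball A e \<subseteq> {A. invertible A}"
    using open_invertible[unfolded open_contains_ball] assms by blast
  have lin: "bounded_linear (\<lambda>H. - (matrix_inv A ** H ** matrix_inv A))"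
    by (intro bounded_linear_minus bounded_linear_compose[OF bl_mm_left bl_mm_right])
  have ct: "isCont matrix_inv A"
    using cont_minv open_invertible assms continuous_on_eq_continuous_at by blast
  show ?thesis
  proof (rule has_derivativeI_sandwich[OF e(1) lin, where H = "\<lambda>y. norm (B - matrix_inv y) * norm B * K * K"])
    fix y assume y: "y \<noteq> A" "dist y A < e"
    then have iy: "invertible y" using e(2) by (auto simp: dist_commute)
    have eq: "matrix_inv y - matrix_inv A - - (matrix_inv A ** (y - A) ** matrix_inv A)
          = (B - matrix_inv y) ** ((y - A) ** B)"
      by (simp add: B_def mmsimps minv[OF iy] minv[OF assms] mm_cong[OF minv(2)[OF iy]] algebra_simps)
    have "norm ((B - matrix_inv y) ** ((y - A) ** B)) \<le> norm (B - matrix_inv y) * (norm (y - A) * norm B * K) * K"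
      by (rule order_trans[OF K(2)]) (intro mult_right_mono mult_left_mono K(2), auto simp: less_imp_le[OF K(1)])
    then show "norm (matrix_inv y - matrix_inv A - - (matrix_inv A ** (y - A) ** matrix_inv A)) / norm (y - A)
          \<le> norm (B - matrix_inv y) * norm B * K * K"
      using y unfolding eq by (simp add: divide_le_eq mult_ac)
  next
    have "((\<lambda>y. B - matrix_inv y) \<longlongrightarrow> B - matrix_inv A) (at A)"
      using ct unfolding isCont_def by (intro tendsto_diff tendsto_const)
    then have "((\<lambda>y. norm (B - matrix_inv y) * norm B * K * K) \<longlongrightarrow> norm (B - matrix_inv A) * norm B * K * K) (at A)"
      by (intro tendsto_mult_right tendsto_norm)
    then show "((\<lambda>y. norm (B - matrix_inv y) * norm B * K * K) \<longlongrightarrow> 0) (at A)"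
      by (simp add: B_def)
  qed
qed


datatype ('a, 'm) mx = Cst "real^'m^'m" | Lin "'a \<Rightarrow> real^'m^'m" | Add "('a,'m) mx" "('a,'m) mx"
  | Mul "('a,'m) mx" "('a,'m) mx" | Ap "real^'m^'m \<Rightarrow> real^'m^'m" "('a,'m) mx" | Inv "('a,'m) mx"

primrec ev :: "('a, 'm::finite) mx \<Rightarrow> 'a \<Rightarrow> real^'m^'m" where
  "ev (Cst c) x = c"
| "ev (Lin l) x = l x"
| "ev (Add a b) x = ev a x + ev b x"
| "ev (Mul a b) x = ev a x ** ev b x"
| "ev (Ap L a) x = L (ev a x)"
| "ev (Inv a) x = matrix_inv (ev a x)"

primrec mwf :: "('a::real_normed_vector, 'm::finite) mx \<Rightarrow> bool" where
  "mwf (Cst c) = True"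
| "mwf (Lin l) = bounded_linear l"
| "mwf (Add a b) = (mwf a \<and> mwf b)"
| "mwf (Mul a b) = (mwf a \<and> mwf b)"
| "mwf (Ap L a) = (bounded_linear L \<and> mwf a)"
| "mwf (Inv a) = mwf a"

primrec okx :: "('a, 'm::finite) mx \<Rightarrow> 'a \<Rightarrow> bool" where
  "okx (Cst c) x = True"
| "okx (Lin l) x = True"
| "okx (Add a b) x = (okx a x \<and> okx b x)"
| "okx (Mul a b) x = (okx a x \<and> okx b x)"
| "okx (Ap L a) x = okx a x"
| "okx (Inv a) x = (okx a x \<and> invertible (ev a x))"

primrec dr :: "'a \<Rightarrow> ('a, 'm::finite) mx \<Rightarrow> ('a, 'm) mx" where
  "dr h (Cst c) = Cst 0"
| "dr h (Lin l) = Cst (l h)"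
| "dr h (Add a b) = Add (dr h a) (dr h b)"
| "dr h (Mul a b) = Add (Mul (dr h a) b) (Mul a (dr h b))"
| "dr h (Ap L a) = Ap L (dr h a)"
| "dr h (Inv a) = Ap uminus (Mul (Inv a) (Mul (dr h a) (Inv a)))"

lemma mwf_dr: "mwf e \<Longrightarrow> mwf (dr h e)"
  by (induction e) (auto intro: bounded_linear_minus bounded_linear_ident)

lemma okx_dr: "okx e x \<Longrightarrow> okx (dr h e) x"
  by (induction e) auto

lemma ev_deriv: "mwf e \<Longrightarrow> okx e x \<Longrightarrow> (ev e has_derivative (\<lambda>h. ev (dr h e) x)) (at x)"
proof (induction e)
  case (Cst c) then show ?case by simp
next
  case (Lin l) then show ?case by (simp add: bounded_linear.has_derivative[OF _ has_derivative_ident])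
next
  case (Add a b) then show ?case by (simp add: has_derivative_add)
next
  case (Mul a b)
  then have "((\<lambda>x. ev a x ** ev b x) has_derivative (\<lambda>h. ev a x ** ev (dr h b) x + ev (dr h a) x ** ev b x)) (at x)"
    by (intro bounded_bilinear.FDERIV[OF bb_mm]) auto
  then show ?case by (simp add: add.commute)
next
  case (Ap L a) then show ?case by (auto intro: bounded_linear.has_derivative)
next
  case (Inv a)
  then have "((\<lambda>x. matrix_inv (ev a x)) has_derivative
     (\<lambda>h. - (matrix_inv (ev a x) ** ev (dr h a) x ** matrix_inv (ev a x)))) (at x)"
    by (intro has_derivative_compose[OF _ minv_deriv]) auto
  then show ?case by (simp add: mm_assoc)
qed

lemma ev_smooth: assumes "mwf e" "\<forall>x\<in>U. okx e x" shows "smooth_on U (ev e)"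
proof -
  have "\<exists>e. f = ev e \<and> mwf e \<and> (\<forall>x\<in>U. okx e x) \<Longrightarrow> smooth_on U f" for f
  proof (coinduction arbitrary: f rule: smooth_on.coinduct)
    case (smooth_on f)
    then obtain e where e: "f = ev e" "mwf e" "\<forall>x\<in>U. okx e x" by blast
    show ?case
      apply (rule exI[of _ f], rule exI[of _ "\<lambda>x h. ev (dr h e) x"])
      using e by (auto intro!: ev_deriv mwf_dr okx_dr)
  qed
  then show ?thesis using assms by blast
qed

lemma smooth_pair: assumes "smooth_on U f" "smooth_on U g" shows "smooth_on U (\<lambda>x. (f x, g x))"
proof -
  have "\<exists>f g. F = (\<lambda>x. (f x, g x)) \<and> smooth_on U f \<and> smooth_on U g \<Longrightarrow> smooth_on U F" for F
  proof (coinduction arbitrary: F rule: smooth_on.coinduct)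
    case (smooth_on F)
    then obtain f g where fg: "F = (\<lambda>x. (f x, g x))" "smooth_on U f" "smooth_on U g" by blast
    obtain Df where Df: "\<forall>x\<in>U. (f has_derivative Df x) (at x)" "\<forall>h. smooth_on U (\<lambda>x. Df x h)"
      using fg(2) by (cases rule: smooth_on.cases) blast
    obtain Dg where Dg: "\<forall>x\<in>U. (g has_derivative Dg x) (at x)" "\<forall>h. smooth_on U (\<lambda>x. Dg x h)"
      using fg(3) by (cases rule: smooth_on.cases) blast
    show ?case
      apply (rule exI[of _ F], rule exI[of _ "\<lambda>x h. (Df x h, Dg x h)"])
      using Df Dg fg(1) by (fastforce intro!: has_derivative_Pair)
  qed
  then show ?thesis using assms by blast
qed

lemma smooth_map_onI: assumes "open U" "S \<subseteq> U" "smooth_on U g" "\<forall>x\<in>S. g x = f x"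
  shows "smooth_map_on S f"
  unfolding smooth_map_on_def using assms by blast


lemma mv_neg: "(- A) *v x = - (A *v x)" for A :: "real^'a::finite^'b::finite"
  by (simp add: matrix_vector_mult_def vec_eq_iff sum_negf)

lemmas mvsimps = matrix_vector_mult_add_rdistrib matrix_vector_mult_diff_rdistrib mv_neg
  matrix_vector_right_distrib vec.diff vec.neg vec.scale matrix_vector_mul_assoc[symmetric]
  matrix_vector_mul_lid scaleR_matrix_vector_assoc[symmetric]

lemma ip_tr: "(A *v x) \<bullet> y = x \<bullet> (transpose A *v y)" for A :: "real^'a::finite^'b::finite"
  by (metis dot_lmul_matrix inner_commute transpose_matrix_vector)

lemma mat_eq_inner: fixes A :: "real^'a::finite^'b::finite"
  assumes "\<And>x y. (A *v x) \<bullet> y = (B *v x) \<bullet> y"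
  shows "A = B"
proof -
  have "A *v x = B *v x" for x
    using assms[of x "A *v x - B *v x"] by (simp add: inner_diff_left inner_diff_right)
      (metis assms eq_iff_diff_eq_0 inner_diff_left inner_eq_zero_iff)
  then show ?thesis by (simp add: matrix_eq)
qed

lemma OmOm_v: "Om *v (Om *v x) = - x"
  by (simp add: matrix_vector_mul_assoc Om_sq mv_neg)

lemma Om_ip: "(Om *v x) \<bullet> (Om *v y) = x \<bullet> y"
  by (simp add: ip_tr Om_tr mv_neg OmOm_v)

definition iso :: "(real^('n::finite+'n)) set \<Rightarrow> bool" where
  "iso L \<longleftrightarrow> (\<forall>v\<in>L. \<forall>w\<in>L. v \<bullet> (Om *v w) = 0)"

definition orthc :: "(real^'m::finite) set \<Rightarrow> (real^'m) set" where
  "orthc L = {y. \<forall>x\<in>L. orthogonal x y}"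

lemma subspace_orthc: "subspace (orthc L)"
  unfolding orthc_def subspace_def orthogonal_def by (auto simp: inner_add_right)

lemma dim_orthc: "subspace L \<Longrightarrow> dim (orthc L) + dim L = 2 * CARD('n)"
  for L :: "(real^('n::finite+'n)) set"
  using dim_subspace_orthogonal_to_vectors[of L UNIV] by (simp add: orthc_def card_sumtype)

lemma lin_Om: "linear ((*v) (Om::'n::finite mat2))"
  by (simp add: matrix_vector_mul_linear)

lemma dim_Om: "dim ((*v) (Om::'n::finite mat2) ` L) = dim L"
proof -
  have "inj ((*v) (Om::'n::finite mat2))"
    by (metis OmOm_v injI neg_equal_iff_equal)
  then show ?thesis by (intro dim_image_eq lin_Om) (auto simp: inj_on_def)
qed

lemma Om_iso_sub: "iso L \<Longrightarrow> (*v) Om ` L \<subseteq> orthc L"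
  unfolding iso_def orthc_def orthogonal_def by auto

lemma iso_dim: fixes L :: "(real^('n::finite+'n)) set"
  assumes "subspace L" "iso L" shows "dim L \<le> CARD('n)"
proof -
  have "dim ((*v) Om ` L) \<le> dim (orthc L)"
    by (rule dim_subset[OF Om_iso_sub[OF assms(2)]])
  then show ?thesis using dim_orthc[OF assms(1)] dim_Om[of L] by simp
qed

lemma lagr_iso: "lagrangian L \<longleftrightarrow> subspace L \<and> dim L = CARD('n) \<and> iso L"
  for L :: "(real^('n::finite+'n)) set"
  unfolding lagrangian_def iso_def symp_Om by blast

lemma lagr_Om: fixes L :: "(real^('n::finite+'n)) set" assumes "lagrangian L" shows "(*v) Om ` L = orthc L"
proof -
  have L: "subspace L" "dim L = CARD('n)" "iso L" using assms lagr_iso by auto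
  show ?thesis
  proof (rule subspace_dim_equal)
    show "subspace ((*v) Om ` L)" by (rule linear_subspace_image[OF lin_Om L(1)])
    show "subspace (orthc L)" by (rule subspace_orthc)
    show "(*v) Om ` L \<subseteq> orthc L" by (rule Om_iso_sub[OF L(3)])
    show "dim (orthc L) \<le> dim ((*v) Om ` L)"
      using dim_orthc[OF L(1)] dim_Om[of L] L(2) by simp
  qed
qed


definition lagP :: "'n::finite mat2 \<Rightarrow> bool" where
  "lagP P \<longleftrightarrow> transpose P = P \<and> P ** P = P \<and> Om ** P + P ** Om = Om"

lemma orthproj_props:
  fixes P :: "real^'m::finite^'m"
  assumes L: "subspace L" and P: "\<forall>x. P *v x \<in> L \<and> (\<forall>y\<in>L. (x - P *v x) \<bullet> y = 0)"
  shows "\<And>y. y \<in> L \<Longrightarrow> P *v y = y" "transpose P = P" "P ** P = P"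
    "\<And>w. w \<in> orthc L \<Longrightarrow> P *v w = 0"
proof -
  show fixL: "P *v y = y" if "y \<in> L" for y
  proof -
    have "y - P *v y \<in> L" using L P that by (simp add: subspace_diff)
    then have "(y - P *v y) \<bullet> (y - P *v y) = 0" using P by blast
    then show ?thesis by simp
  qed
  have sy: "(P *v x) \<bullet> y = x \<bullet> (P *v y)" for x y
  proof -
    have a: "(y - P *v y) \<bullet> (P *v x) = 0" using P by blast
    have b: "(x - P *v x) \<bullet> (P *v y) = 0" using P by blast
    have "(P *v x) \<bullet> y = (P *v x) \<bullet> (P *v y) + (P *v x) \<bullet> (y - P *v y)"
      by (simp add: inner_diff_right)
    moreover have "(P *v x) \<bullet> (y - P *v y) = 0" using a by (simp only: inner_commute)
    ultimately have "(P *v x) \<bullet> y = (P *v x) \<bullet> (P *v y)" by simp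
    also have "\<dots> = x \<bullet> (P *v y)" using b by (simp add: inner_diff_left)
    finally show ?thesis .
  qed
  show "transpose P = P"
  proof (rule mat_eq_inner)
    fix x y
    have "(transpose P *v x) \<bullet> y = x \<bullet> (P *v y)" using ip_tr[of "transpose P" x y] by simp
    then show "(transpose P *v x) \<bullet> y = (P *v x) \<bullet> y" using sy by simp
  qed
  show "P ** P = P"
    by (simp add: matrix_eq fixL P flip: matrix_vector_mul_assoc)
  show "P *v w = 0" if "w \<in> orthc L" for w
  proof -
    have 1: "(P *v w) \<bullet> w = 0" using that P unfolding orthc_def orthogonal_def by blast
    have 2: "(w - P *v w) \<bullet> (P *v w) = 0" using P by blast
    have "(P *v w) \<bullet> (P *v w) = (P *v w) \<bullet> w - (P *v w) \<bullet> (w - P *v w)" by (simp add: inner_diff_right)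
    also have "\<dots> = 0" using 1 2 by (simp add: inner_commute)
    finally have "(P *v w) \<bullet> (P *v w) = 0" .
    then show ?thesis by simp
  qed
qed

lemma lagP_POP: "lagP P \<Longrightarrow> P ** Om ** P = 0"
proof -
  assume "lagP P"
  then have h: "P ** P = P" "P ** Om = Om - Om ** P" unfolding lagP_def by (auto simp: algebra_simps)
  have "P ** Om ** P = (Om - Om ** P) ** P" by (simp add: h)
  also have "\<dots> = 0" by (simp add: mmsimps h)
  finally show ?thesis .
qed

lemma G_imp_lagP: fixes P :: "'n::finite mat2" assumes "P \<in> lag_grassmannian" shows "lagP P"
proof -
  obtain L where L: "lagrangian L" "\<forall>x. P *v x \<in> L \<and> (\<forall>y\<in>L. (x - P *v x) \<bullet> y = 0)"
    using assms unfolding lag_grassmannian_def by blast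
  have sL: "subspace L" using L(1) lagrangian_def by blast
  note pp = orthproj_props[OF sL L(2)]
  have OmL: "(*v) Om ` L = orthc L" by (rule lagr_Om[OF L(1)])
  have "(Om ** P + P ** Om) *v x = Om *v x" for x
  proof -
    define z where "z = x - P *v x"
    have "z \<in> orthc L" using L(2) unfolding z_def orthc_def orthogonal_def by (auto simp: inner_commute)
    then obtain l where l: "l \<in> L" "z = Om *v l" using OmL by auto
    have "Om *v (P *v x) \<in> orthc L" using OmL L(2) by auto
    then have a: "P *v (Om *v (P *v x)) = 0" using pp(4) by blast
    have b: "P *v (Om *v z) = - l" using l pp(1) by (simp add: OmOm_v vec.neg)
    have "x = P *v x + z" by (simp add: z_def)
    then have e1: "Om *v x = Om *v (P *v x) + Om *v z" by (metis vec.add)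
    have e2: "P *v (Om *v x) = - l" using a b e1 by (metis add.left_neutral vec.add)
    have e3: "Om *v z = - l" using l by (simp add: OmOm_v)
    have "(Om ** P + P ** Om) *v x = Om *v (P *v x) + P *v (Om *v x)" by (simp add: mvsimps)
    also have "\<dots> = Om *v (P *v x) + - l" by (subst e2) (rule refl)
    also have "\<dots> = Om *v x" using e1 e3 by simp
    finally show ?thesis .
  qed
  then have "Om ** P + P ** Om = Om" by (simp add: matrix_eq)
  then show ?thesis unfolding lagP_def using pp by blast
qed

lemma lagP_imp_G: fixes P :: "'n::finite mat2" assumes "lagP P" shows "P \<in> lag_grassmannian"
proof -
  have h: "transpose P = P" "P ** P = P" "Om ** P + P ** Om = Om" using assms lagP_def by auto
  have POP: "P ** Om ** P = 0" by (rule lagP_POP[OF assms])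
  define L where "L = range ((*v) P)"
  have sL: "subspace L" unfolding L_def by (rule linear_subspace_image[OF matrix_vector_mul_linear subspace_UNIV])
  have PL: "y \<in> L \<Longrightarrow> P *v y = y" for y unfolding L_def using h(2) by (auto simp: matrix_vector_mul_assoc)
  have inL: "P *v y = y \<Longrightarrow> y \<in> L" for y unfolding L_def by (metis rangeI)
  have isoL: "iso L"
    unfolding iso_def L_def
  proof (clarify)
    fix a b
    have "(P *v a) \<bullet> (Om *v (P *v b)) = a \<bullet> ((P ** Om ** P) *v b)"
      by (simp add: ip_tr h(1) matrix_vector_mul_assoc mm_assoc)
    then show "(P *v a) \<bullet> (Om *v (P *v b)) = 0" by (simp add: POP)
  qed
  have "orthc L \<subseteq> (*v) Om ` L"
  proof
    fix w assume w: "w \<in> orthc L"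
    have "(P *v w) \<bullet> (P *v w) = w \<bullet> (P *v (P *v w))" by (simp add: ip_tr h(1))
    also have "\<dots> = w \<bullet> (P *v w)" by (simp add: matrix_vector_mul_assoc h(2))
    also have "\<dots> = 0" using w unfolding orthc_def orthogonal_def L_def by (auto simp: inner_commute)
    finally have Pw: "P *v w = 0" by simp
    have "P *v (Om *v w) = Om *v w"
    proof -
      have "(Om ** P + P ** Om) *v w = Om *v w" by (simp add: h(3))
      then show ?thesis by (simp add: mvsimps Pw flip: matrix_vector_mul_assoc)
    qed
    then have "- (Om *v w) \<in> L" using inL by (simp add: vec.neg)
    moreover have "w = Om *v (- (Om *v w))" by (simp add: vec.neg OmOm_v)
    ultimately show "w \<in> (*v) Om ` L" by blast
  qed
  then have "dim (orthc L) \<le> dim L" using dim_subset dim_Om by metis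
  then have "dim L = CARD('n)" using dim_orthc[OF sL] iso_dim[OF sL isoL] by simp
  then have "lagrangian L" using lagr_iso sL isoL by blast
  moreover have "\<forall>x. P *v x \<in> L \<and> (\<forall>y\<in>L. (x - P *v x) \<bullet> y = 0)"
  proof (intro allI conjI ballI)
    fix x show "P *v x \<in> L" unfolding L_def by simp
    fix y assume "y \<in> L"
    then have "y = P *v y" using PL by simp
    then have "(x - P *v x) \<bullet> y = (P *v (x - P *v x)) \<bullet> y"
      by (metis ip_tr h(1))
    also have "\<dots> = 0" by (simp add: mvsimps) (simp add: matrix_vector_mul_assoc h(2))
    finally show "(x - P *v x) \<bullet> y = 0" .
  qed
  ultimately show ?thesis unfolding lag_grassmannian_def by blast
qed

lemma G_char: "P \<in> lag_grassmannian \<longleftrightarrow> lagP P"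
  using G_imp_lagP lagP_imp_G by blast


declare transpose_matrix_vector[simp del]

definition Fp :: "real^'m::finite^'m \<Rightarrow> real^'m^'m" where
  "Fp Q = Q ** matrix_inv (Q + transpose Q - mat 1)"

lemma inj_invertible: fixes A :: "real^'m::finite^'m"
  assumes "\<And>v. A *v v = 0 \<Longrightarrow> v = 0" shows "invertible A"
proof -
  have "inj ((*v) A)"
  proof (rule injI)
    fix x y assume "A *v x = A *v y"
    then have "A *v (x - y) = 0" by (simp add: vec.diff)
    then show "x = y" using assms[of "x - y"] by simp
  qed
  then show ?thesis
    using matrix_left_invertible_injective invertible_left_inverse by blast
qed

lemma idem_M_inv: fixes Q :: "real^'m::finite^'m" assumes Q: "Q ** Q = Q"
  shows "invertible (Q + transpose Q - mat 1)"
proof (rule inj_invertible)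
  fix v assume v: "(Q + transpose Q - mat 1) *v v = 0"
  then have v1: "Q *v v + transpose Q *v v = v" by (simp add: mvsimps algebra_simps)
  then have "Q *v (Q *v v + transpose Q *v v) = Q *v v" by simp
  then have "Q *v (transpose Q *v v) = 0" by (simp add: matrix_vector_right_distrib matrix_vector_mul_assoc Q)
  then have "(transpose Q *v v) \<bullet> (transpose Q *v v) = 0"
    by (simp add: ip_tr)
  then have "transpose Q *v v = 0" by simp
  then have "Q *v v = v" using v1 by simp
  then have "v \<bullet> v = (transpose Q *v v) \<bullet> v" by (metis ip_tr transpose_transpose inner_commute)
  then show "v = 0" using \<open>transpose Q *v v = 0\<close> by simp
qed

lemma inv_unique: fixes A :: "real^'m::finite^'m" assumes "A ** B = mat 1"
  shows "matrix_inv A = B"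
proof -
  have i: "invertible A" using assms invertible_right_inverse by blast
  have "matrix_inv A = matrix_inv A ** (A ** B)" by (simp add: assms)
  also have "\<dots> = B" by (simp add: matrix_mul_assoc minv(2)[OF i])
  finally show ?thesis .
qed

lemma Fp_props: fixes Q :: "real^'m::finite^'m" assumes Q: "Q ** Q = Q"
  shows "transpose (Fp Q) = Fp Q" "Fp Q ** Fp Q = Fp Q" "Fp Q ** Q = Q" "Q ** Fp Q = Fp Q"
proof -
  define M where "M = Q + transpose Q - mat 1"
  define N where "N = matrix_inv M"
  have iM: "invertible M" using idem_M_inv[OF Q] M_def by simp
  have MN: "M ** N = mat 1" "N ** M = mat 1" using minv[OF iM] N_def by auto
  have Qt: "transpose Q ** transpose Q = transpose Q" by (simp only: matrix_transpose_mul[symmetric] Q)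
  have tM: "transpose M = M" by (simp add: M_def mmsimps)
  have tN: "transpose N = N"
  proof -
    have "transpose (N ** M) = mat 1" using MN(2) by simp
    then have "M ** transpose N = mat 1" by (simp only: matrix_transpose_mul tM)
    then have "matrix_inv M = transpose N" by (rule inv_unique)
    then show ?thesis using N_def by simp
  qed
  have QM: "Q ** M = Q ** transpose Q" by (simp add: M_def mmsimps Q)
  have MQt: "M ** transpose Q = Q ** transpose Q" by (simp add: M_def mmsimps Qt)
  have QtM: "transpose Q ** M = transpose Q ** Q" by (simp add: M_def mmsimps Qt)
  have MQ: "M ** Q = transpose Q ** Q" by (simp add: M_def mmsimps Q)
  have NQ: "N ** Q = transpose Q ** N"
  proof -
    have "N ** Q = N ** (Q ** M) ** N" by (simp add: mm_assoc MN)
    also have "\<dots> = N ** (M ** transpose Q) ** N" by (simp add: QM MQt)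
    also have "\<dots> = transpose Q ** N" by (simp add: mm_assoc mm_cong[OF MN(2)])
    finally show ?thesis .
  qed
  have NQt: "N ** transpose Q = Q ** N"
  proof -
    have "N ** transpose Q = N ** (transpose Q ** M) ** N" by (simp add: mm_assoc MN)
    also have "\<dots> = N ** (M ** Q) ** N" by (simp add: QtM MQ)
    also have "\<dots> = Q ** N" by (simp add: mm_assoc mm_cong[OF MN(2)])
    finally show ?thesis .
  qed
  have F: "Fp Q = Q ** N" by (simp add: Fp_def N_def M_def)
  show t: "transpose (Fp Q) = Fp Q" by (simp add: F matrix_transpose_mul tN NQt)
  show FQ: "Fp Q ** Q = Q"
  proof -
    have "Fp Q ** Q = Q ** (transpose Q ** N)" by (simp add: F mm_assoc NQ)
    also have "\<dots> = (Q ** M) ** N" by (simp add: QM mm_assoc)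
    also have "\<dots> = Q" by (simp add: mm_assoc MN)
    finally show ?thesis .
  qed
  show "Fp Q ** Fp Q = Fp Q"
  proof -
    have "Fp Q ** Fp Q = Fp Q ** (Q ** N)" by (simp only: F[symmetric])
    also have "\<dots> = (Fp Q ** Q) ** N" by (rule matrix_mul_assoc)
    also have "\<dots> = Fp Q" unfolding FQ by (simp only: F)
    finally show ?thesis .
  qed
  show "Q ** Fp Q = Fp Q" by (simp add: F matrix_mul_assoc Q)
qed

lemma range_Fp: fixes Q :: "real^'m::finite^'m" assumes Q: "Q ** Q = Q"
  shows "range ((*v) (Fp Q)) = range ((*v) Q)"
proof
  show "range ((*v) (Fp Q)) \<subseteq> range ((*v) Q)"
  proof (clarify)
    fix x have "Fp Q *v x = Q *v (Fp Q *v x)" by (simp add: matrix_vector_mul_assoc Fp_props(4)[OF Q])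
    then show "Fp Q *v x \<in> range ((*v) Q)" by simp
  qed
  show "range ((*v) Q) \<subseteq> range ((*v) (Fp Q))"
  proof (clarify)
    fix x have "Q *v x = Fp Q *v (Q *v x)" by (simp add: matrix_vector_mul_assoc Fp_props(3)[OF Q])
    then show "Q *v x \<in> range ((*v) (Fp Q))" by simp
  qed
qed

lemma Fp_eq: fixes Q P :: "real^'m::finite^'m" assumes Q: "Q ** Q = Q"
  and P: "transpose P = P" "P ** Q = Q" "Q ** P = P"
  shows "Fp Q = P"
proof -
  note fp = Fp_props[OF Q]
  have "Fp Q ** P = Fp Q ** (Q ** P)" by (simp add: P)
  also have "\<dots> = (Fp Q ** Q) ** P" by (rule matrix_mul_assoc)
  also have "\<dots> = P" by (simp add: fp P)
  finally have 1: "Fp Q ** P = P" .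
  have 2: "P ** Fp Q = Fp Q"
  proof -
    have "P ** Fp Q = P ** (Q ** Fp Q)" by (simp add: fp)
    also have "\<dots> = Fp Q" by (subst matrix_mul_assoc) (simp only: P(2) fp(4))
    finally show ?thesis .
  qed
  have "Fp Q = transpose (P ** Fp Q)" by (simp add: 2 fp)
  also have "\<dots> = Fp Q ** P" by (simp add: matrix_transpose_mul fp P)
  finally show ?thesis using 1 by simp
qed

lemma orthproj_range: fixes P :: "real^'m::finite^'m"
  assumes "transpose P = P" "P ** P = P"
  shows "\<forall>x. P *v x \<in> range ((*v) P) \<and> (\<forall>y\<in>range ((*v) P). (x - P *v x) \<bullet> y = 0)"
proof (intro allI conjI ballI)
  fix x show "P *v x \<in> range ((*v) P)" by simp
  fix y assume "y \<in> range ((*v) P)"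
  then obtain b where b: "y = P *v b" by auto
  have "(x - P *v x) \<bullet> y = (P *v (x - P *v x)) \<bullet> b"
    using ip_tr[of P "x - P *v x" b] assms(1) b by (simp add: inner_commute)
  also have "\<dots> = 0" by (simp add: mvsimps) (simp add: matrix_vector_mul_assoc assms(2))
  finally show "(x - P *v x) \<bullet> y = 0" .
qed

lemma G_from_lagr: fixes P :: "'n::finite mat2"
  assumes "transpose P = P" "P ** P = P" "lagrangian (range ((*v) P))"
  shows "P \<in> lag_grassmannian"
  unfolding lag_grassmannian_def using assms orthproj_range by blast

lemma lagP_lagr: fixes P :: "'n::finite mat2" assumes "lagP P" shows "lagrangian (range ((*v) P))"
proof -
  obtain L where L: "lagrangian L" "\<forall>x. P *v x \<in> L \<and> (\<forall>y\<in>L. (x - P *v x) \<bullet> y = 0)"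
    using lagP_imp_G[OF assms] unfolding lag_grassmannian_def by blast
  have sL: "subspace L" using L(1) lagrangian_def by blast
  have "range ((*v) P) = L"
  proof
    show "range ((*v) P) \<subseteq> L" using L(2) by auto
    show "L \<subseteq> range ((*v) P)"
    proof
      fix y assume "y \<in> L"
      then have "y = P *v y" using orthproj_props(1)[OF sL L(2)] by simp
      then show "y \<in> range ((*v) P)" by (metis rangeI)
    qed
  qed
  then show ?thesis using L(1) by simp
qed


definition Tsp :: "'n::finite mat2 \<Rightarrow> 'n mat2 set" where
  "Tsp P = {X. transpose X = X \<and> X = P ** X + X ** P \<and> Om ** X + X ** Om = 0}"

lemma linear_tr: "linear (transpose :: real^'a::finite^'b::finite \<Rightarrow> _)"
  by (rule linearI) (simp_all add: tr_add transpose_scalar)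

lemma bl_tr: "bounded_linear (transpose :: real^'a::finite^'b::finite \<Rightarrow> _)"
  using linear_tr linear_conv_bounded_linear by blast

lemma deriv_agree:
  fixes f g :: "real \<Rightarrow> 'b::real_normed_vector"
  assumes "(f has_derivative F) (at 0)" "(g has_derivative G) (at 0)" "e > 0"
    "\<And>t. t \<in> {-e<..<e} \<Longrightarrow> f t = g t"
  shows "F = G"
proof -
  have "(g has_derivative F) (at 0)"
    by (rule has_derivative_transform_within_open[where s="{-e<..<e}", OF assms(1) _ _ assms(4)]) (use assms(3) in auto)
  then show ?thesis using assms(2) has_derivative_unique by blast
qed

lemma tangent_sub: fixes P :: "'n::finite mat2"
  assumes v: "v \<in> tangent_space lag_grassmannian P"
  shows "v \<in> Tsp P"
proof -
  obtain \<gamma> e where g: "e > 0" "smooth_on {-e<..<e} \<gamma>" "\<gamma> ` {-e<..<e} \<subseteq> lag_grassmannian"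
    "\<gamma> 0 = P" "(\<gamma> has_vector_derivative v) (at 0)"
    using v unfolding tangent_space_def by blast
  have d: "(\<gamma> has_derivative (\<lambda>t. t *\<^sub>R v)) (at 0)" using g(5) has_vector_derivative_def by blast
  have lg: "lagP (\<gamma> t)" if "t \<in> {-e<..<e}" for t using g(3) that G_char by blast
  have "(\<lambda>t. transpose (t *\<^sub>R v)) = (\<lambda>t. t *\<^sub>R v)"
  proof (rule deriv_agree[OF _ d g(1)])
    show "((\<lambda>t. transpose (\<gamma> t)) has_derivative (\<lambda>t. transpose (t *\<^sub>R v))) (at 0)"
      by (rule bounded_linear.has_derivative[OF bl_tr d])
    show "transpose (\<gamma> t) = \<gamma> t" if "t \<in> {-e<..<e}" for t using lg[OF that] lagP_def by blast
  qed
  from fun_cong[OF this, of 1] have 1: "transpose v = v" by simp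
  have "(\<lambda>t. \<gamma> 0 ** (t *\<^sub>R v) + (t *\<^sub>R v) ** \<gamma> 0) = (\<lambda>t. t *\<^sub>R v)"
  proof (rule deriv_agree[OF _ d g(1)])
    show "((\<lambda>t. \<gamma> t ** \<gamma> t) has_derivative (\<lambda>t. \<gamma> 0 ** (t *\<^sub>R v) + (t *\<^sub>R v) ** \<gamma> 0)) (at 0)"
      by (rule bounded_bilinear.FDERIV[OF bb_mm d d])
    show "\<gamma> t ** \<gamma> t = \<gamma> t" if "t \<in> {-e<..<e}" for t using lg[OF that] lagP_def by blast
  qed
  from fun_cong[OF this, of 1] have 2: "P ** v + v ** P = v" using g(4) by simp
  have "(\<lambda>t. Om ** (t *\<^sub>R v) + (t *\<^sub>R v) ** Om) = (\<lambda>t. 0)"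
  proof (rule deriv_agree[OF _ has_derivative_const g(1)])
    show "((\<lambda>t. Om ** \<gamma> t + \<gamma> t ** Om) has_derivative (\<lambda>t. Om ** (t *\<^sub>R v) + (t *\<^sub>R v) ** Om)) (at 0)"
      by (intro has_derivative_add bounded_linear.has_derivative[OF bl_mm_right d]
          bounded_linear.has_derivative[OF bl_mm_left d])
    show "Om ** \<gamma> t + \<gamma> t ** Om = Om" if "t \<in> {-e<..<e}" for t using lg[OF that] lagP_def by blast
  qed
  from fun_cong[OF this, of 1] have 3: "Om ** v + v ** Om = 0" by simp
  show ?thesis unfolding Tsp_def using 1 2 3 by simp
qed


lemma bl_scaleR_left: "bounded_linear (\<lambda>t::real. t *\<^sub>R (Y::'a::real_normed_vector))"
  by (rule bounded_linear_scaleR_left)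

lemma bl_uminus: "bounded_linear (uminus :: 'a::real_normed_vector \<Rightarrow> 'a)"
  using bounded_linear_minus[OF bounded_linear_ident] by (simp add: fun_eq_iff)

lemma mm_cong0: "A ** B = 0 \<Longrightarrow> A ** (B ** D) = 0" for A :: "real^'a::finite^'b::finite"
  by (simp add: matrix_mul_assoc)

lemma lagP_facts: fixes P :: "'n::finite mat2" assumes "lagP P"
  shows "transpose P = P" "P ** P = P" "\<And>Z::'n mat2. P ** (P ** Z) = P ** Z"
    "P ** (Om ** P) = 0" "\<And>Z::'n mat2. P ** (Om ** (P ** Z)) = 0"
proof -
  show 1: "transpose P = P" "P ** P = P" using assms lagP_def by auto
  show "P ** (P ** Z) = P ** Z" for Z :: "'n mat2" by (rule mm_cong[OF 1(2)])
  show 2: "P ** (Om ** P) = 0" using lagP_POP[OF assms] by (simp add: mm_assoc)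
  have h2: "(P ** Om) ** P = 0" using 2 by (simp add: mm_assoc)
  show "P ** (Om ** (P ** Z)) = 0" for Z :: "'n mat2" using mm_cong0[OF h2, of Z] by (simp add: mm_assoc)
qed

lemma lagP_POm: "lagP P \<Longrightarrow> P ** Om = Om - Om ** P"
  unfolding lagP_def by (auto simp: algebra_simps)

lemma Tsp_facts: fixes P :: "'n::finite mat2" assumes "lagP P" "X \<in> Tsp P"
  shows "transpose X = X" "Om ** X = - (X ** Om)" "\<And>Z::'n mat2. Om ** (X ** Z) = - (X ** (Om ** Z))"
    "P ** (X ** P) = 0" "\<And>Z::'n mat2. P ** (X ** (P ** Z)) = 0"
    "P ** (X ** (Om ** P)) = X ** (Om ** P)" "P ** (X ** (X ** (Om ** P))) = 0"
    "X = P ** X + X ** P"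
proof -
  note lp = lagP_facts[OF assms(1)]
  show 1: "transpose X = X" "X = P ** X + X ** P" using assms(2) Tsp_def by auto
  have "Om ** X + X ** Om = 0" using assms(2) Tsp_def by blast
  then show 3: "Om ** X = - (X ** Om)" by (simp add: eq_neg_iff_add_eq_0)
  show "Om ** (X ** Z) = - (X ** (Om ** Z))" for Z :: "'n mat2"
    using mm_cong[OF 3, of Z] by (simp add: mmsimps)
  have "P ** X ** P = P ** (P ** X + X ** P) ** P" using 1(2) by simp
  also have "\<dots> = P ** X ** P + P ** X ** P" by (simp add: mmsimps lp)
  finally show 2: "P ** (X ** P) = 0" by (simp add: mm_assoc)
  have h2: "(P ** X) ** P = 0" using 2 by (simp add: mm_assoc)
  show "P ** (X ** (P ** Z)) = 0" for Z :: "'n mat2" using mm_cong0[OF h2, of Z] by (simp add: mm_assoc)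
  have "X ** (Om ** P) = (P ** X + X ** P) ** (Om ** P)" using 1(2) by simp
  also have "\<dots> = P ** (X ** (Om ** P))" by (simp add: mmsimps lp)
  finally have 4: "X ** (Om ** P) = P ** (X ** (Om ** P))" .
  then show "P ** (X ** (Om ** P)) = X ** (Om ** P)" by simp
  have "P ** (X ** (X ** (Om ** P))) = P ** (X ** (P ** (X ** (Om ** P))))" using 4 by simp
  also have "\<dots> = 0" using mm_cong0[OF h2, of "X ** (Om ** P)"] by (simp add: mm_assoc)
  finally show "P ** (X ** (X ** (Om ** P))) = 0" .
qed

definition Kc :: "'n::finite mat2 \<Rightarrow> 'n mat2 \<Rightarrow> real \<Rightarrow> 'n mat2" where
  "Kc P X t = P + t *\<^sub>R ((mat 1 - P) ** X ** P)"

lemma Kc_facts: fixes P :: "'n::finite mat2" assumes "lagP P" "X \<in> Tsp P"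
  shows "Kc P X t ** Kc P X t = Kc P X t" "Kc P X t ** P = Kc P X t" "P ** Kc P X t = P"
    "transpose (Kc P X t) ** Om ** Kc P X t = 0"
proof -
  note lp = lagP_facts[OF assms(1)] and tp = Tsp_facts(1-7)[OF assms]
  show "Kc P X t ** Kc P X t = Kc P X t" by (simp add: Kc_def mmsimps lp algebra_simps)
  show "Kc P X t ** P = Kc P X t" by (simp add: Kc_def mmsimps lp algebra_simps)
  show "P ** Kc P X t = P" by (simp add: Kc_def mmsimps lp algebra_simps)
  show "transpose (Kc P X t) ** Om ** Kc P X t = 0"
    by (simp add: Kc_def mmsimps lp tp algebra_simps)
qed


lemma mat_times_num: "(A :: real^'a::finite^'b::finite) * numeral n = (numeral n :: real) *\<^sub>R A"
  by (simp add: vec_eq_iff)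
lemma mat_num_times: "numeral n * (A :: real^'a::finite^'b::finite) = (numeral n :: real) *\<^sub>R A"
  by (simp add: vec_eq_iff)

lemma Kc_lagr: fixes P :: "'n::finite mat2" assumes "lagP P" "X \<in> Tsp P"
  shows "lagrangian (range ((*v) (Kc P X t)))"
proof -
  note kf = Kc_facts[OF assms, of t]
  let ?K = "Kc P X t"
  have sub: "subspace (range ((*v) ?K))"
    by (rule linear_subspace_image[OF matrix_vector_mul_linear subspace_UNIV])
  have iso: "iso (range ((*v) ?K))"
    unfolding iso_def
  proof (clarify)
    fix a b
    have "(?K *v a) \<bullet> (Om *v (?K *v b)) = a \<bullet> ((transpose ?K ** Om ** ?K) *v b)"
      by (simp add: ip_tr matrix_vector_mul_assoc mm_assoc)
    then show "(?K *v a) \<bullet> (Om *v (?K *v b)) = 0" by (simp add: kf(4))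
  qed
  have lP: "lagrangian (range ((*v) P))" by (rule lagP_lagr[OF assms(1)])
  have sP: "subspace (range ((*v) P))"
    by (rule linear_subspace_image[OF matrix_vector_mul_linear subspace_UNIV])
  have rK: "range ((*v) ?K) = (*v) ?K ` range ((*v) P)"
  proof -
    have "?K *v x = ?K *v (P *v x)" for x by (simp add: matrix_vector_mul_assoc kf(2))
    then show ?thesis by (auto simp: image_iff)
  qed
  have inj: "inj_on ((*v) ?K) (span (range ((*v) P)))"
  proof -
    have sp: "span (range ((*v) P)) = range ((*v) P)" using sP span_eq_iff by blast
    have "inj_on ((*v) ?K) (range ((*v) P))"
    proof (rule inj_onI, clarify)
      fix a b assume "?K *v (P *v a) = ?K *v (P *v b)"
      then have "P *v (?K *v (P *v a)) = P *v (?K *v (P *v b))" by simp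
      then show "P *v a = P *v b"
        by (simp add: matrix_vector_mul_assoc kf(2) kf(3) lagP_facts(2)[OF assms(1)])
    qed
    then show ?thesis unfolding sp .
  qed
  have "dim (range ((*v) ?K)) = dim (range ((*v) P))"
    unfolding rK by (rule dim_image_eq[OF matrix_vector_mul_linear inj])
  then have "dim (range ((*v) ?K)) = CARD('n)" using lP[unfolded lagrangian_def] by simp
  then show ?thesis using lagr_iso sub iso by blast
qed

lemma curve_in_G: fixes P :: "'n::finite mat2" assumes "lagP P" "X \<in> Tsp P"
  shows "Fp (Kc P X t) \<in> lag_grassmannian"
proof -
  note kf = Kc_facts[OF assms, of t]
  show ?thesis
    by (rule G_from_lagr) (simp_all add: Fp_props[OF kf(1)] range_Fp[OF kf(1)] Kc_lagr[OF assms])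
qed

definition Ke :: "'n::finite mat2 \<Rightarrow> 'n mat2 \<Rightarrow> (real, 'n+'n) mx" where
  "Ke P X = Add (Cst P) (Lin (\<lambda>t. t *\<^sub>R ((mat 1 - P) ** X ** P)))"

definition Ge :: "'n::finite mat2 \<Rightarrow> 'n mat2 \<Rightarrow> (real, 'n+'n) mx" where
  "Ge P X = Mul (Ke P X) (Inv (Add (Add (Ke P X) (Ap transpose (Ke P X))) (Cst (- mat 1))))"

lemma ev_Ge: "ev (Ge P X) t = Fp (Kc P X t)"
  by (simp add: Ge_def Ke_def Fp_def Kc_def)

lemma mwf_Ge: "mwf (Ge P X)"
  by (simp add: Ge_def Ke_def bl_scaleR_left bl_tr)

lemma okx_Ge: fixes P :: "'n::finite mat2" assumes "lagP P" "X \<in> Tsp P" shows "okx (Ge P X) t"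
  using idem_M_inv[OF Kc_facts(1)[OF assms, of t]]
  by (simp add: Ge_def Ke_def Kc_def)

lemma deriv_Ge: fixes P :: "'n::finite mat2" assumes "lagP P" "X \<in> Tsp P"
  shows "(\<lambda>h. ev (dr h (Ge P X)) 0) = (\<lambda>h. h *\<^sub>R X)"
proof
  fix h
  note lp = lagP_facts[OF assms(1)] and tp = Tsp_facts(1-7)[OF assms]
  have N0: "matrix_inv (2 * P - mat 1) = 2 * P - mat 1"
    by (rule inv_unique) (simp add: mmsimps lp algebra_simps mat_times_num mat_num_times)
  have "ev (dr h (Ge P X)) 0 = h *\<^sub>R (P ** X + X ** P)"
    apply (simp add: Ge_def Ke_def lp N0)
    apply (simp add: mmsimps lp tp mat_num_times mat_times_num algebra_simps)
    done
  then show "ev (dr h (Ge P X)) 0 = h *\<^sub>R X" using Tsp_facts(8)[OF assms] by simp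
qed


lemma tangent_sup: fixes P :: "'n::finite mat2" assumes "lagP P" "X \<in> Tsp P"
  shows "X \<in> tangent_space lag_grassmannian P"
  unfolding tangent_space_def
proof (intro CollectI exI conjI)
  show "(0::real) < 1" by simp
  show "smooth_on {-1<..<1} (ev (Ge P X))"
    by (rule ev_smooth[OF mwf_Ge]) (use okx_Ge[OF assms] in blast)
  show "ev (Ge P X) ` {-1<..<1} \<subseteq> lag_grassmannian"
    using curve_in_G[OF assms] by (auto simp: ev_Ge)
  have "Kc P X 0 = P" by (simp add: Kc_def)
  moreover have "Fp P = P"
    using lagP_facts[OF assms(1)] by (intro Fp_eq) auto
  ultimately show "ev (Ge P X) 0 = P" by (simp add: ev_Ge)
  show "(ev (Ge P X) has_vector_derivative X) (at 0)"
    unfolding has_vector_derivative_def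
    using ev_deriv[OF mwf_Ge okx_Ge[OF assms], of 0] deriv_Ge[OF assms] by simp
qed

lemma TB_char: "tangent_bundle (lag_grassmannian :: 'n::finite mat2 set) = {(P, X). lagP P \<and> X \<in> Tsp P}"
  unfolding tangent_bundle_def using G_char tangent_sub tangent_sup by blast


lemma mat_eq_inner2: fixes A :: "real^'a::finite^'b::finite"
  assumes "\<And>v w. v \<bullet> (A *v w) = v \<bullet> (B *v w)" shows "A = B"
proof -
  have "A *v w = B *v w" for w
  proof -
    have "(A *v w - B *v w) \<bullet> (A *v w - B *v w) = (A *v w - B *v w) \<bullet> (A *v w) - (A *v w - B *v w) \<bullet> (B *v w)"
      by (simp add: inner_diff_right)
    also have "\<dots> = 0" using assms[of "A *v w - B *v w" w] by simp
    finally show ?thesis by simp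
  qed
  then show ?thesis by (simp add: matrix_eq)
qed

lemma antisymp_char: "S \<in> antisymp_invol \<longleftrightarrow>
   invertible S \<and> S ** S = mat 1 \<and> transpose S ** Om ** S = - (Om :: 'n::finite mat2)"
proof -
  have e: "symp (S *v v) (S *v w) = v \<bullet> ((transpose S ** Om ** S) *v w)" for v w
    by (simp add: symp_Om ip_tr matrix_vector_mul_assoc mm_assoc)
  have e2: "- symp v w = v \<bullet> ((- Om) *v w)" for v w :: "real^('n+'n)"
    by (simp add: symp_Om mv_neg)
  have "(\<forall>v w. symp (S *v v) (S *v w) = - symp v w) \<longleftrightarrow> transpose S ** Om ** S = - Om"
  proof
    assume a: "\<forall>v w. symp (S *v v) (S *v w) = - symp v w"
    show "transpose S ** Om ** S = - Om"
    proof (rule mat_eq_inner2)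
      fix v w show "v \<bullet> ((transpose S ** Om ** S) *v w) = v \<bullet> ((- Om) *v w)"
        using e[of v w] e2[of v w] a by simp
    qed
  next
    assume "transpose S ** Om ** S = - Om"
    then show "\<forall>v w. symp (S *v v) (S *v w) = - symp v w" using e e2 by simp
  qed
  then show ?thesis unfolding antisymp_invol_def by blast
qed

definition Qs :: "'n::finite mat2 \<Rightarrow> 'n mat2" where "Qs S = (1/2) *\<^sub>R (mat 1 + S)"

definition fmap :: "'n::finite mat2 \<Rightarrow> 'n mat2 \<times> 'n mat2" where
  "fmap S = (Fp (Qs S), (Fp (Qs S) - Qs S) + transpose (Fp (Qs S) - Qs S))"

definition gmap :: "'n::finite mat2 \<times> 'n mat2 \<Rightarrow> 'n mat2" where
  "gmap PX = 2 *\<^sub>R (fst PX - fst PX ** snd PX) - mat 1"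


lemma S_facts: fixes S :: "'n::finite mat2" assumes "S \<in> antisymp_invol"
  shows "S ** S = mat 1" "\<And>Z::'n mat2. S ** (S ** Z) = Z" "transpose S ** (Om ** S) = - Om"
    "transpose S ** Om = - (Om ** S)" "S ** Om = - (Om ** transpose S)"
proof -
  have h: "invertible S" "S ** S = mat 1" "transpose S ** Om ** S = - Om" using assms antisymp_char by auto
  show 1: "S ** S = mat 1" by (rule h(2))
  show "S ** (S ** Z) = Z" for Z :: "'n mat2" using mm_cong[OF 1, of Z] by simp
  show 3: "transpose S ** (Om ** S) = - Om" using h(3) by (simp add: mm_assoc)
  have "transpose S ** Om = (transpose S ** (Om ** S)) ** S" by (simp only: mm_assoc 1 matrix_mul_rid)
  also have "\<dots> = - (Om ** S)" by (simp only: 3 mm_rneg)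
  finally show 4: "transpose S ** Om = - (Om ** S)" .
  have "S ** Om = Om ** (transpose S ** Om) ** Om"
    by (simp add: 4 mmsimps Om_sq mm_cong[OF Om_sq])
  also have "\<dots> = - (Om ** transpose S)" by (simp add: mm_assoc Om_sq mm_lneg)
  finally show "S ** Om = - (Om ** transpose S)" .
qed

lemma Qs_facts: fixes S :: "'n::finite mat2" assumes "S \<in> antisymp_invol"
  shows "Qs S ** Qs S = Qs S" "transpose (Qs S) ** Om ** Qs S = 0"
    "transpose (mat 1 - Qs S) ** Om ** (mat 1 - Qs S) = 0"
    "Om ** Qs S + transpose (Qs S) ** Om = Om" "Qs S ** Om + Om ** transpose (Qs S) = Om"
proof -
  note sf = S_facts[OF assms]
  have sf4: "transpose S ** (Om ** Z) = - (Om ** (S ** Z))" for Z :: "'n mat2"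
    using mm_cong[OF sf(4), of Z] by (simp add: mmsimps)
  have T: "(mat 1 + S) ** (mat 1 + S) = 2 *\<^sub>R (mat 1 + S)" by (simp add: mmsimps sf scaleR_2 algebra_simps)
  show "Qs S ** Qs S = Qs S" by (simp add: Qs_def mm_lscale mm_rscale T)
  have T2: "(mat 1 + transpose S) ** Om ** (mat 1 + S) = 0" by (simp add: mmsimps sf sf4)
  show "transpose (Qs S) ** Om ** Qs S = 0"
    using T2 by (simp add: Qs_def mm_lscale mm_rscale transpose_scalar tr_add)
  have mQ: "mat 1 - Qs S = (1/2) *\<^sub>R (mat 1 - S)"
    by (simp add: Qs_def vec_eq_iff mat_def field_simps)
  have T3: "(mat 1 - transpose S) ** Om ** (mat 1 - S) = 0" by (simp add: mmsimps sf sf4)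
  show "transpose (mat 1 - Qs S) ** Om ** (mat 1 - Qs S) = 0"
    using T3 unfolding mQ by (simp add: mm_lscale mm_rscale transpose_scalar tr_diff)
  have T4: "Om ** (mat 1 + S) + (mat 1 + transpose S) ** Om = 2 *\<^sub>R Om"
    by (simp add: mmsimps sf scaleR_2 algebra_simps)
  show "Om ** Qs S + transpose (Qs S) ** Om = Om"
  proof -
    have "Om ** Qs S + transpose (Qs S) ** Om = (1/2) *\<^sub>R (Om ** (mat 1 + S)) + (1/2) *\<^sub>R ((mat 1 + transpose S) ** Om)"
      by (simp add: Qs_def mm_lscale mm_rscale transpose_scalar tr_add)
    also have "\<dots> = (1/2) *\<^sub>R (Om ** (mat 1 + S) + (mat 1 + transpose S) ** Om)"
      by (simp only: scaleR_add_right)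
    finally show ?thesis by (simp add: T4)
  qed
  have T5: "(mat 1 + S) ** Om + Om ** (mat 1 + transpose S) = 2 *\<^sub>R Om"
    by (simp add: mmsimps sf scaleR_2 algebra_simps)
  show "Qs S ** Om + Om ** transpose (Qs S) = Om"
  proof -
    have "Qs S ** Om + Om ** transpose (Qs S) = (1/2) *\<^sub>R ((mat 1 + S) ** Om) + (1/2) *\<^sub>R (Om ** (mat 1 + transpose S))"
      by (simp add: Qs_def mm_lscale mm_rscale transpose_scalar tr_add)
    also have "\<dots> = (1/2) *\<^sub>R ((mat 1 + S) ** Om + Om ** (mat 1 + transpose S))"
      by (simp only: scaleR_add_right)
    finally show ?thesis by (simp add: T5)
  qed
qed


lemma iso_range: fixes A :: "'n::finite mat2" assumes "transpose A ** Om ** A = 0"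
  shows "iso (range ((*v) A))"
  unfolding iso_def
proof (clarify)
  fix a b
  have "(A *v a) \<bullet> (Om *v (A *v b)) = a \<bullet> ((transpose A ** Om ** A) *v b)"
    by (simp add: ip_tr matrix_vector_mul_assoc mm_assoc)
  then show "(A *v a) \<bullet> (Om *v (A *v b)) = 0" by (simp add: assms)
qed

lemma subspace_range: "subspace (range ((*v) (A::real^'a::finite^'b::finite)))"
  by (rule linear_subspace_image[OF matrix_vector_mul_linear subspace_UNIV])

lemma f_lagP: fixes S :: "'n::finite mat2" assumes "S \<in> antisymp_invol"
  shows "lagP (Fp (Qs S))"
proof -
  note qf = Qs_facts[OF assms]
  define Q where "Q = Qs S"
  define Lp where "Lp = range ((*v) Q)"
  define Lm where "Lm = range ((*v) (mat 1 - Q))"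
  have sp: "subspace Lp" "subspace Lm" unfolding Lp_def Lm_def by (rule subspace_range)+
  have ip: "iso Lp" "iso Lm" unfolding Lp_def Lm_def Q_def using iso_range qf(2,3) by blast+
  have d: "dim Lp \<le> CARD('n)" "dim Lm \<le> CARD('n)" using iso_dim sp ip by blast+
  have U: "{x + y |x y. x \<in> Lp \<and> y \<in> Lm} = UNIV"
  proof -
    have "z = Q *v z + (mat 1 - Q) *v z" for z by (simp add: mvsimps)
    then show ?thesis unfolding Lp_def Lm_def by blast
  qed
  have "dim {x + y |x y. x \<in> Lp \<and> y \<in> Lm} + dim (Lp \<inter> Lm) = dim Lp + dim Lm"
    by (rule dim_sums_Int[OF sp])
  then have "2 * CARD('n) \<le> dim Lp + dim Lm" unfolding U by (simp add: card_sumtype)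
  then have "dim Lp = CARD('n)" using d by simp
  then have "lagrangian Lp" using lagr_iso sp ip by blast
  then have "Fp Q \<in> lag_grassmannian"
    using G_from_lagr Fp_props[OF qf(1)[folded Q_def]] range_Fp[OF qf(1)[folded Q_def]] Lp_def by metis
  then show ?thesis using G_char Q_def by blast
qed

lemma f_X: fixes S :: "'n::finite mat2" assumes "S \<in> antisymp_invol"
  shows "(Fp (Qs S) - Qs S) + transpose (Fp (Qs S) - Qs S) \<in> Tsp (Fp (Qs S))"
proof -
  note qf = Qs_facts[OF assms]
  define Q where "Q = Qs S"
  define P where "P = Fp Q"
  have lP: "lagP P" using f_lagP[OF assms] P_def Q_def by simp
  note fp = Fp_props[OF qf(1)[folded Q_def], folded P_def]
  have h: "transpose P = P" "P ** P = P" "P ** Q = Q" "Q ** P = P" "P ** transpose Q = P" "transpose Q ** P = transpose Q"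
    using fp apply simp_all
    apply (metis fp(1) fp(4) matrix_transpose_mul)
    by (metis fp(1) fp(3) matrix_transpose_mul)
  have hc: "P ** (P ** Z) = P ** Z" "P ** (Q ** Z) = Q ** Z" "Q ** (P ** Z) = P ** Z"
    "P ** (transpose Q ** Z) = P ** Z" "transpose Q ** (P ** Z) = transpose Q ** Z" for Z :: "'n mat2"
    using mm_cong[OF h(2)] mm_cong[OF h(3)] mm_cong[OF h(4)] mm_cong[OF h(5)] mm_cong[OF h(6)] by auto
  define X where "X = (P - Q) + transpose (P - Q)"
  have 1: "transpose X = X" unfolding X_def by (simp only: tr_add transpose_transpose add.commute)
  have 2: "X = P ** X + X ** P" by (simp add: X_def tr_diff h hc mmsimps algebra_simps mat_times_num mat_num_times)
  have "Om ** X + X ** Om = (Om ** P + P ** Om) + (Om ** P + P ** Om) - (Om ** Q + transpose Q ** Om)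
        - (Q ** Om + Om ** transpose Q)"
    by (simp add: X_def tr_diff h mmsimps algebra_simps mat_times_num mat_num_times)
  also have "\<dots> = 0" using lP qf(4,5) unfolding lagP_def Q_def by simp
  finally have 3: "Om ** X + X ** Om = 0" .
  show ?thesis using 1 2 3 unfolding Tsp_def X_def P_def Q_def by blast
qed


lemma key_OPX: fixes P :: "'n::finite mat2" assumes "lagP P" "X \<in> Tsp P"
  shows "Om ** (P ** X) + X ** (P ** Om) = 0"
proof -
  have PO: "P ** Om = Om - Om ** P" by (rule lagP_POm[OF assms(1)])
  have OP: "Om ** P = Om - P ** Om" using PO by (simp add: algebra_simps mat_times_num mat_num_times)
  have OX: "Om ** X = - (X ** Om)" by (rule Tsp_facts(2)[OF assms])
  have XE: "X = P ** X + X ** P" by (rule Tsp_facts(8)[OF assms])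
  have PX: "P ** X = X - X ** P" using XE by (simp add: algebra_simps mat_times_num mat_num_times)
  have a: "Om ** (P ** X) = Om ** X - P ** (Om ** X)"
    by (simp only: mm_assoc[symmetric] OP mm_rdiff)
  have b: "X ** (P ** Om) = X ** Om - X ** (Om ** P)"
    by (simp only: PO mm_ldiff mm_assoc)
  have c: "P ** (X ** Om) = X ** (Om ** P)"
  proof -
    have "P ** (X ** Om) = (P ** X) ** Om" by (simp add: mm_assoc)
    also have "\<dots> = X ** Om - X ** (P ** Om)" by (simp only: PX mm_rdiff mm_assoc)
    also have "\<dots> = X ** (Om ** P)" by (simp add: PO mm_ldiff)
    finally show ?thesis .
  qed
  have "Om ** (P ** X) + X ** (P ** Om) = (- (X ** Om) + P ** (X ** Om)) + (X ** Om - X ** (Om ** P))"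
    by (simp add: a b OX mm_lneg)
  also have "\<dots> = 0" by (simp add: c)
  finally show ?thesis .
qed

lemma two_idem: fixes Q :: "real^'m::finite^'m" assumes "Q ** Q = Q"
  shows "(2 *\<^sub>R Q - mat 1) ** (2 *\<^sub>R Q - mat 1) = mat 1"
  apply (simp add: mmsimps assms)
  apply (simp add: vec_eq_iff algebra_simps)
  done

lemma two_antisymp: fixes Q :: "'n::finite mat2"
  assumes "transpose Q ** Om ** Q = 0" "Om ** Q + transpose Q ** Om = Om"
  shows "transpose (2 *\<^sub>R Q - mat 1) ** Om ** (2 *\<^sub>R Q - mat 1) = - Om"
proof -
  have "transpose (2 *\<^sub>R Q - mat 1) ** Om ** (2 *\<^sub>R Q - mat 1)
     = 4 *\<^sub>R (transpose Q ** Om ** Q) - 2 *\<^sub>R (Om ** Q + transpose Q ** Om) + Om"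
    apply (simp add: mmsimps transpose_scalar tr_diff)
    apply (simp add: vec_eq_iff algebra_simps)
    done
  also have "\<dots> = - Om" apply (simp add: assms) apply (simp add: vec_eq_iff algebra_simps) done
  finally show ?thesis .
qed

lemma g_in_A: fixes P :: "'n::finite mat2" assumes "lagP P" "X \<in> Tsp P"
  shows "gmap (P, X) \<in> antisymp_invol"
proof -
  note lp = lagP_facts[OF assms(1)] and tp = Tsp_facts(1-7)[OF assms]
  define Q where "Q = P - P ** X"
  have QQ: "Q ** Q = Q" by (simp add: Q_def mmsimps lp tp)
  have S: "gmap (P, X) = 2 *\<^sub>R Q - mat 1" by (simp add: gmap_def Q_def)
  have tQ: "transpose Q = P - X ** P" by (simp add: Q_def tr_diff matrix_transpose_mul lp tp)
  have a1: "transpose Q ** Om ** Q = 0" by (simp add: tQ Q_def mmsimps lp tp)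
  have "Om ** Q + transpose Q ** Om = (Om ** P + P ** Om) - (Om ** (P ** X) + X ** (P ** Om))"
    by (simp add: tQ Q_def mmsimps lp tp algebra_simps mat_times_num mat_num_times)
  also have "\<dots> = Om" using key_OPX[OF assms] assms(1) unfolding lagP_def by simp
  finally have a2: "Om ** Q + transpose Q ** Om = Om" .
  have SS: "gmap (P, X) ** gmap (P, X) = mat 1" unfolding S by (rule two_idem[OF QQ])
  then have "invertible (gmap (P, X))" unfolding invertible_def by blast
  then show ?thesis unfolding antisymp_char using SS two_antisymp[OF a1 a2] S by simp
qed

lemma fg: fixes P :: "'n::finite mat2" assumes "lagP P" "X \<in> Tsp P"
  shows "fmap (gmap (P, X)) = (P, X)"
proof -
  note lp = lagP_facts[OF assms(1)] and tp = Tsp_facts(1-7)[OF assms]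
  define Q where "Q = P - P ** X"
  have QQ: "Q ** Q = Q" by (simp add: Q_def mmsimps lp tp)
  have qs: "Qs (gmap (P, X)) = Q"
    by (simp add: Qs_def gmap_def Q_def algebra_simps mat_times_num mat_num_times)
  have fq: "Fp Q = P"
    by (rule Fp_eq[OF QQ]) (simp_all add: Q_def mmsimps lp tp)
  have "(P - Q) + transpose (P - Q) = P ** X + X ** P"
    by (simp add: Q_def tr_diff matrix_transpose_mul lp tp)
  also have "\<dots> = X" using Tsp_facts(8)[OF assms] by simp
  finally show ?thesis unfolding fmap_def qs fq by simp
qed

lemma gf: fixes S :: "'n::finite mat2" assumes "S \<in> antisymp_invol"
  shows "gmap (fmap S) = S"
proof -
  note qf = Qs_facts[OF assms]
  define Q where "Q = Qs S"
  define P where "P = Fp Q"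
  note fp = Fp_props[OF qf(1)[folded Q_def], folded P_def]
  have h: "transpose P = P" "P ** P = P" "P ** Q = Q" "P ** transpose Q = P"
    using fp apply simp_all
    by (metis fp(1) fp(4) matrix_transpose_mul)
  have "gmap (fmap S) = 2 *\<^sub>R (P - P ** ((P - Q) + transpose (P - Q))) - mat 1"
    by (simp add: gmap_def fmap_def P_def Q_def)
  also have "\<dots> = 2 *\<^sub>R Q - mat 1" by (simp add: mmsimps tr_diff h mat_times_num mat_num_times)
  also have "\<dots> = S" by (simp add: Q_def Qs_def)
  finally show ?thesis .
qed


definition Qe :: "('n::finite mat2, 'n+'n) mx" where
  "Qe = Add (Cst ((1/2) *\<^sub>R mat 1)) (Lin (\<lambda>S. (1/2) *\<^sub>R S))"
definition Me :: "('n::finite mat2, 'n+'n) mx" where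
  "Me = Add (Add Qe (Ap transpose Qe)) (Cst (- mat 1))"
definition Pe :: "('n::finite mat2, 'n+'n) mx" where
  "Pe = Mul Qe (Inv Me)"
definition Xe :: "('n::finite mat2, 'n+'n) mx" where
  "Xe = Add (Add Pe (Ap uminus Qe)) (Ap transpose (Add Pe (Ap uminus Qe)))"

lemma ev_Qe: "ev Qe S = Qs S" by (simp add: Qe_def Qs_def scaleR_add_right)
lemma ev_Me: "ev Me S = Qs S + transpose (Qs S) - mat 1" by (simp add: Me_def ev_Qe)
lemma ev_Pe: "ev Pe S = Fp (Qs S)" by (simp add: Pe_def ev_Qe ev_Me Fp_def)
lemma ev_Xe: "ev Xe S = (Fp (Qs S) - Qs S) + transpose (Fp (Qs S) - Qs S)"
  by (simp add: Xe_def ev_Qe ev_Pe)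

lemma mwf_Qe: "mwf (Qe :: ('n::finite mat2, 'n+'n) mx)"
  by (simp add: Qe_def bounded_linear_scaleR_right)
lemma mwf_Me: "mwf (Me :: ('n::finite mat2, 'n+'n) mx)" by (simp add: Me_def mwf_Qe bl_tr)
lemma mwf_Pe: "mwf (Pe :: ('n::finite mat2, 'n+'n) mx)" by (simp add: Pe_def mwf_Qe mwf_Me)
lemma mwf_Xe: "mwf (Xe :: ('n::finite mat2, 'n+'n) mx)" by (simp add: Xe_def mwf_Pe mwf_Qe bl_tr bl_uminus)

lemma okx_Qe: "okx Qe S" by (simp add: Qe_def)
lemma okx_Me: "okx Me S" by (simp add: Me_def okx_Qe)
lemma okx_Pe: "okx Pe S = invertible (ev Me S)" by (simp add: Pe_def okx_Qe okx_Me)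
lemma okx_Xe: "okx Xe S = invertible (ev Me S)" by (simp add: Xe_def okx_Pe okx_Qe)

lemma open_U: "open {S :: 'n::finite mat2. invertible (ev Me S)}"
proof -
  have "continuous (at S) (ev (Me :: ('n mat2, 'n+'n) mx))" for S
    using ev_deriv[OF mwf_Me okx_Me] has_derivative_continuous by blast
  then have "open (ev (Me :: ('n mat2, 'n+'n) mx) -` {A. invertible A})"
    by (intro continuous_open_vimage open_invertible)
  then show ?thesis by (simp add: vimage_def)
qed

lemma smooth_f: "smooth_map_on (antisymp_invol :: 'n::finite mat2 set) fmap"
proof (rule smooth_map_onI[OF open_U])
  show "antisymp_invol \<subseteq> {S :: 'n mat2. invertible (ev Me S)}"
    using Qs_facts(1) idem_M_inv by (auto simp: ev_Me)
  show "smooth_on {S :: 'n mat2. invertible (ev Me S)} (\<lambda>S. (ev Pe S, ev Xe S))"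
    by (intro smooth_pair ev_smooth mwf_Pe mwf_Xe) (simp_all add: okx_Pe okx_Xe)
  show "\<forall>x\<in>antisymp_invol. (ev Pe x, ev Xe x) = fmap x"
    by (simp add: fmap_def ev_Pe ev_Xe)
qed

definition Ge2 :: "('n::finite mat2 \<times> 'n mat2, 'n+'n) mx" where
  "Ge2 = Add (Ap (\<lambda>M. 2 *\<^sub>R M) (Add (Lin fst) (Ap uminus (Mul (Lin fst) (Lin snd))))) (Cst (- mat 1))"

lemma smooth_g: "smooth_map_on (tangent_bundle (lag_grassmannian :: 'n::finite mat2 set)) gmap"
proof (rule smooth_map_onI[OF open_UNIV subset_UNIV])
  show "smooth_on UNIV (ev (Ge2 :: ('n mat2 \<times> 'n mat2, 'n+'n) mx))"
    by (rule ev_smooth) (simp_all add: Ge2_def bounded_linear_scaleR_right bounded_linear_fst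
        bounded_linear_snd bl_uminus)
  show "\<forall>x\<in>tangent_bundle lag_grassmannian. ev Ge2 x = gmap x"
    by (simp add: Ge2_def gmap_def)
qed

theorem mainTheorem4:
  shows "diffeomorphic_sets (antisymp_invol :: (real^('n::finite + 'n)^('n + 'n)) set)
           (tangent_bundle (lag_grassmannian :: (real^('n + 'n)^('n + 'n)) set))"
  unfolding diffeomorphic_sets_def
proof (intro exI conjI)
  show "fmap ` antisymp_invol \<subseteq> tangent_bundle (lag_grassmannian :: 'n mat2 set)"
    unfolding TB_char using f_lagP f_X by (auto simp: fmap_def)
  show "gmap ` tangent_bundle lag_grassmannian \<subseteq> (antisymp_invol :: 'n mat2 set)"
    unfolding TB_char using g_in_A by auto
  show "\<forall>x\<in>antisymp_invol. gmap (fmap x) = (x :: 'n mat2)" using gf by blast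
  show "\<forall>y\<in>tangent_bundle (lag_grassmannian :: 'n mat2 set). fmap (gmap y) = y"
    unfolding TB_char using fg by auto
  show "smooth_map_on antisymp_invol (fmap :: 'n mat2 \<Rightarrow> _)" by (rule smooth_f)
  show "smooth_map_on (tangent_bundle lag_grassmannian) (gmap :: _ \<Rightarrow> 'n mat2)" by (rule smooth_g)
qed


end
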